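(* Let $k\ge 1$ be an integer, $S$ a poset, and let $S\otimes_i G_i$ and $S\otimes_i H_i$ be terminating ordered joins in the same shape $S$. If $\Gamma_k(G_i)=\Gamma_k(H_i)$ for every $i\in S$, then $\Gamma_k(S\otimes_i G_i)=\Gamma_k(S\otimes_i H_i)$.
   Context: All games are impartial combinatorial games under normal play; a game is determined by its set of options, and $G \to G'$ means $G'$ is an option of $G$. A game is terminating if it admits no infinite sequence of moves. $\mathbf{0}$ denotes the game with no options. For terminating games define recursively: $\Gamma_0(G)=\operatorname{mex}\{\Gamma_0(G') : G\to G'\}$ (the Grundy number; $\operatorname{mex}\Lambda$ is the least ordinal not in the set of ordinals $\Lambda$), and for $k\ge1$, $\Gamma_k(G)=\{\Gamma_{k-1}(G') : G\to G'\}$. Ordered join: for a poset $S$ and a family $(G_i)_{i\in S}$ of games, $S \otimes_i G_i$ is the game whose options are exactly the ordered joins $S \otimes_i G'_i$ obtained by choosing one $i_0\in S$ and an option $G_{i_0}\to G'_{i_0}$, and setting $G'_i=\mathbf{0}$ for all $i>i_0$ and $G'_i=G_i$ for all other $i\ne i_0$. *)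

theory Defs
  imports Main
begin

text \<open>Games are modelled as nodes of an abstract move structure: a type 'g together with
  an option map opts :: 'g => 'g set (G -> G' iff G' : opts G).\<close>

definition terminating :: "('g \<Rightarrow> 'g set) \<Rightarrow> 'g \<Rightarrow> bool" where
  "terminating opts G \<longleftrightarrow> G \<in> Wellfounded.acc {(G', H). G' \<in> opts H}"

text \<open>mex of a set of ordinals; ordinals are elements of a well-ordered type 'o.\<close>
definition mex :: "'o::wellorder set \<Rightarrow> 'o" where
  "mex A = (LEAST a. a \<notin> A)"

inductive grundy_rel :: "('g \<Rightarrow> 'g set) \<Rightarrow> 'g \<Rightarrow> 'o::wellorder \<Rightarrow> bool" for opts where
  "(\<forall>G'\<in>opts G. grundy_rel opts G' (f G')) \<Longrightarrow> grundy_rel opts G (mex (f ` opts G))"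

definition grundy :: "('g \<Rightarrow> 'g set) \<Rightarrow> 'g \<Rightarrow> 'o::wellorder" where
  "grundy opts G = (THE a. grundy_rel opts G a)"

text \<open>gamma_eq TYPE('o) opts k G H expresses Gamma_k(G) = Gamma_k(H):
  Gamma_0 is the Grundy number, and Gamma_(k+1)(G) = {Gamma_k(G') : G -> G'}, so equality of
  Gamma_(k+1) is equality of the two image sets.\<close>
primrec gamma_eq :: "'o::wellorder itself \<Rightarrow> ('g \<Rightarrow> 'g set) \<Rightarrow> nat \<Rightarrow> 'g \<Rightarrow> 'g \<Rightarrow> bool" where
  "gamma_eq t opts 0 G H \<longleftrightarrow> (grundy opts G :: 'o) = grundy opts H"
| "gamma_eq t opts (Suc k) G H \<longleftrightarrow>
     (\<forall>G'\<in>opts G. \<exists>H'\<in>opts H. gamma_eq t opts k G' H') \<and>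
     (\<forall>H'\<in>opts H. \<exists>G'\<in>opts G. gamma_eq t opts k G' H')"

text \<open>oj is the ordered join over the poset 'i (the whole type, with its order), z the game 0:
  the options of oj Gs are exactly the joins obtained by moving in one component i0 and
  resetting all components i > i0 to 0.\<close>
definition is_ordered_join ::
  "('g \<Rightarrow> 'g set) \<Rightarrow> 'g \<Rightarrow> (('i::order \<Rightarrow> 'g) \<Rightarrow> 'g) \<Rightarrow> bool" where
  "is_ordered_join opts z oj \<longleftrightarrow>
     opts z = {} \<and>
     (\<forall>Gs. opts (oj Gs) =
        {oj (\<lambda>i. if i = i0 then G' else if i0 < i then z else Gs i) | i0 G'. G' \<in> opts (Gs i0)})"

end

theory Submission
  imports Defs
begin

definition upd :: "'g \<Rightarrow> ('i::order \<Rightarrow> 'g) \<Rightarrow> 'i \<Rightarrow> 'g \<Rightarrow> 'i \<Rightarrow> 'g" where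
  "upd z A i0 G' = (\<lambda>i. if i = i0 then G' else if i0 < i then z else A i)"

definition Cc :: "'o::wellorder itself \<Rightarrow> ('g \<Rightarrow> 'g set) \<Rightarrow> 'g \<Rightarrow> nat \<Rightarrow> ('i::order \<Rightarrow> 'g) \<Rightarrow> ('i \<Rightarrow> 'g) \<Rightarrow> bool" where
  "Cc t opts z m A B \<longleftrightarrow> (\<forall>i. gamma_eq t opts (Suc m) (A i) (B i) \<or>
      (gamma_eq t opts m (A i) (B i) \<and> (\<forall>j. i < j \<longrightarrow> A j = z \<and> B j = z)))"

definition Ez where "Ez t opts z oj X Y \<longleftrightarrow> (\<exists>A B. X = oj A \<and> Y = oj B \<and> terminating opts X \<and> terminating opts Y \<and> Cc t opts z 0 A B)"

lemma gamma_eq_refl: "gamma_eq t opts k G G"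
  by (induction k arbitrary: G) auto

lemma gamma_eq_sym: "gamma_eq t opts k G H \<Longrightarrow> gamma_eq t opts k H G"
  by (induction k arbitrary: G H) (simp, fastforce)

lemma Cc_sym: "Cc t opts z m A B \<Longrightarrow> Cc t opts z m B A"
  unfolding Cc_def by (metis gamma_eq_sym)

lemma term_opt: "terminating opts G \<Longrightarrow> G' \<in> opts G \<Longrightarrow> terminating opts G'"
  unfolding terminating_def by (erule acc_downward) simp

lemma grundy_rel_unique: "grundy_rel opts G a \<Longrightarrow> grundy_rel opts G b \<Longrightarrow> a = b"
proof (induction arbitrary: b rule: grundy_rel.induct)
  case (1 G f)
  from 1(2) obtain f' where f': "\<forall>G'\<in>opts G. grundy_rel opts G' (f' G')" and b: "b = mex (f' ` opts G)"
    by (cases rule: grundy_rel.cases) auto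
  have "f ` opts G = f' ` opts G" using 1(1) f' by (intro image_cong) auto
  then show ?case using b by simp
qed

lemma grundy_ex: fixes opts :: "'g \<Rightarrow> 'g set" shows "terminating opts G \<Longrightarrow> grundy_rel opts G (mex ((grundy opts :: 'g \<Rightarrow> 'o::wellorder) ` opts G))
   \<and> (grundy opts G :: 'o) = mex ((grundy opts :: 'g \<Rightarrow> 'o) ` opts G)"
  unfolding terminating_def
proof (induction rule: acc_induct_rule)
  case (1 x)
  have r: "grundy_rel opts x (mex ((grundy opts :: 'g \<Rightarrow> 'o) ` opts x))"
    by (rule grundy_rel.intros) (use 1 in auto)
  then have "(grundy opts x :: 'o) = mex ((grundy opts :: 'g \<Rightarrow> 'o) ` opts x)"
    unfolding grundy_def[of opts x]
  proof (rule the_equality)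
    fix y :: 'o assume "grundy_rel opts x y"
    then show "y = mex ((grundy opts :: 'g \<Rightarrow> 'o) ` opts x)" using r by (rule grundy_rel_unique)
  qed
  with r show ?case by simp
qed

lemma grundy_eq: fixes opts :: "'g \<Rightarrow> 'g set" shows "terminating opts G \<Longrightarrow> (grundy opts G :: 'o::wellorder) = mex ((grundy opts :: 'g \<Rightarrow> 'o) ` opts G)"
  using grundy_ex[where 'o='o and opts=opts] by blast

lemma gamma_eq_mono: fixes t :: "'o::wellorder itself" and opts :: "'g \<Rightarrow> 'g set" shows "terminating opts G \<Longrightarrow> terminating opts H \<Longrightarrow>
   gamma_eq t opts (Suc k) G H \<Longrightarrow> gamma_eq t opts k G H"
proof (induction k arbitrary: G H)
  case 0
  have s0: "(\<forall>G'\<in>opts G. \<exists>H'\<in>opts H. (grundy opts G' :: 'o) = grundy opts H') \<and>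
     (\<forall>H'\<in>opts H. \<exists>G'\<in>opts G. (grundy opts G' :: 'o) = grundy opts H')"
    using 0(3) by (simp only: gamma_eq.simps)
  have "(grundy opts :: 'g \<Rightarrow> 'o) ` opts G = grundy opts ` opts H"
  proof (intro equalityI subsetI)
    fix a assume "a \<in> (grundy opts :: 'g \<Rightarrow> 'o) ` opts G"
    then obtain G' where G': "G' \<in> opts G" "a = grundy opts G'" by blast
    then obtain H' where "H' \<in> opts H" "(grundy opts G' :: 'o) = grundy opts H'" using s0 by blast
    then show "a \<in> (grundy opts :: 'g \<Rightarrow> 'o) ` opts H" using G' by (metis image_eqI)
  next
    fix a assume "a \<in> (grundy opts :: 'g \<Rightarrow> 'o) ` opts H"
    then obtain H' where H': "H' \<in> opts H" "a = grundy opts H'" by blast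
    then obtain G' where "G' \<in> opts G" "(grundy opts G' :: 'o) = grundy opts H'" using s0 by blast
    then show "a \<in> (grundy opts :: 'g \<Rightarrow> 'o) ` opts G" using H' by (metis image_eqI)
  qed
  then show ?case using grundy_eq[OF 0(1), where 'o='o] grundy_eq[OF 0(2), where 'o='o] by simp
next
  case (Suc k)
  have tG: "\<And>G'. G' \<in> opts G \<Longrightarrow> terminating opts G'" by (rule term_opt[OF Suc.prems(1)])
  have tH: "\<And>H'. H' \<in> opts H \<Longrightarrow> terminating opts H'" by (rule term_opt[OF Suc.prems(2)])
  have s: "(\<forall>G'\<in>opts G. \<exists>H'\<in>opts H. gamma_eq t opts (Suc k) G' H') \<and>
     (\<forall>H'\<in>opts H. \<exists>G'\<in>opts G. gamma_eq t opts (Suc k) G' H')"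
    using Suc.prems(3)[unfolded gamma_eq.simps(2)[of t opts "Suc k"]] .
  have "(\<forall>G'\<in>opts G. \<exists>H'\<in>opts H. gamma_eq t opts k G' H') \<and>
     (\<forall>H'\<in>opts H. \<exists>G'\<in>opts G. gamma_eq t opts k G' H')"
  proof (intro conjI ballI)
    fix G' assume G': "G' \<in> opts G"
    then obtain H' where H': "H' \<in> opts H" and g: "gamma_eq t opts (Suc k) G' H'" using s by blast
    show "\<exists>H'\<in>opts H. gamma_eq t opts k G' H'" using Suc.IH[OF tG[OF G'] tH[OF H'] g] H' by blast
  next
    fix H' assume H': "H' \<in> opts H"
    then obtain G' where G': "G' \<in> opts G" and g: "gamma_eq t opts (Suc k) G' H'" using s by blast
    show "\<exists>G'\<in>opts G. gamma_eq t opts k G' H'" using Suc.IH[OF tG[OF G'] tH[OF H'] g] G' by blast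
  qed
  then show ?case unfolding gamma_eq.simps(2)[of t opts k] .
qed

lemma mex_props: "A \<noteq> UNIV \<Longrightarrow> mex A \<notin> A \<and> (\<forall>a. a < mex A \<longrightarrow> a \<in> A)"
  unfolding mex_def by (metis (mono_tags, lifting) LeastI_ex UNIV_eq_I not_less_Least)

context
  fixes opts :: "'g \<Rightarrow> 'g set" and z :: 'g and oj :: "('i::order \<Rightarrow> 'g) \<Rightarrow> 'g"
  assumes big: "\<not> (\<exists>f :: 'g \<Rightarrow> 'o::wellorder. surj f)"
    and join: "is_ordered_join opts z oj"
begin

lemma z_opts: "opts z = {}"
  using join unfolding is_ordered_join_def by simp

lemma join_opts: "opts (oj A) = {oj (upd z A i0 G') | i0 G'. G' \<in> opts (A i0)}"
  using join unfolding is_ordered_join_def upd_def by simp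

lemma upd_in: "G' \<in> opts (A i0) \<Longrightarrow> oj (upd z A i0 G') \<in> opts (oj A)"
  using join_opts by blast

lemma grundy_props: assumes "terminating opts G"
  shows "(grundy opts G :: 'o) \<notin> grundy opts ` opts G \<and> (\<forall>a < (grundy opts G :: 'o). \<exists>G'\<in>opts G. grundy opts G' = a)"
proof -
  have "(grundy opts :: 'g \<Rightarrow> 'o) ` opts G \<noteq> UNIV"
    using big by (metis image_subset_iff subsetI subset_antisym surj_def UNIV_I rangeI)
  from mex_props[OF this] grundy_eq[OF assms, where 'o='o] show ?thesis by (auto simp: image_def)
qed

lemma term_comp_aux: "X \<in> Wellfounded.acc R \<Longrightarrow> R = {(G', H). G' \<in> opts H} \<Longrightarrow> \<forall>A j. X = oj A \<longrightarrow> A j \<in> Wellfounded.acc R"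
proof (induction rule: acc.induct)
  case (accI x)
  show ?case
  proof (intro allI impI)
    fix A j assume x: "x = oj A"
    show "A j \<in> Wellfounded.acc R"
    proof (rule acc.accI)
      fix y assume "(y, A j) \<in> R"
      then have "oj (upd z A j y) \<in> opts x" using x upd_in accI.prems by simp
      then have "upd z A j y j \<in> Wellfounded.acc R" using accI.IH accI.prems by blast
      then show "y \<in> Wellfounded.acc R" by (simp add: upd_def)
    qed
  qed
qed

lemma term_comp: "terminating opts (oj A) \<Longrightarrow> terminating opts (A j)"
  unfolding terminating_def using term_comp_aux by blast

lemma opt_step:
  assumes C: "Cc TYPE('o) opts z m A B" and A': "A' \<in> opts (A i1)"
    and e: "gamma_eq TYPE('o) opts m A' B'"
  shows "Cc TYPE('o) opts z m (upd z A i1 A') (upd z B i1 B')"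
  unfolding Cc_def
proof
  fix j
  show "gamma_eq TYPE('o) opts (Suc m) (upd z A i1 A' j) (upd z B i1 B' j) \<or>
      (gamma_eq TYPE('o) opts m (upd z A i1 A' j) (upd z B i1 B' j) \<and>
      (\<forall>l. j < l \<longrightarrow> upd z A i1 A' l = z \<and> upd z B i1 B' l = z))"
  proof (cases "j = i1")
    case True then show ?thesis using e by (auto simp: upd_def)
  next
    case ne: False
    show ?thesis
    proof (cases "i1 < j")
      case True then show ?thesis using ne by (auto simp: upd_def gamma_eq_refl)
    next
      case False
      from C have "gamma_eq TYPE('o) opts (Suc m) (A j) (B j) \<or>
      (gamma_eq TYPE('o) opts m (A j) (B j) \<and> (\<forall>l. j < l \<longrightarrow> A l = z \<and> B l = z))"
        unfolding Cc_def by blast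
      then show ?thesis
      proof
        assume "gamma_eq TYPE('o) opts (Suc m) (A j) (B j)"
        then show ?thesis using ne False by (simp add: upd_def)
      next
        assume h: "gamma_eq TYPE('o) opts m (A j) (B j) \<and> (\<forall>l. j < l \<longrightarrow> A l = z \<and> B l = z)"
        have "\<not> j < i1" using h A' z_opts by auto
        then show ?thesis using h ne False by (auto simp: upd_def)
      qed
    qed
  qed
qed


lemma grundy_crit:
  assumes E: "\<And>X Y. E X Y \<Longrightarrow> terminating opts X \<and> terminating opts Y \<and>
     (\<forall>X'\<in>opts X. (\<exists>X''\<in>opts X'. E X'' Y) \<or> (\<exists>Y'\<in>opts Y. E X' Y')) \<and>
     (\<forall>Y'\<in>opts Y. (\<exists>Y''\<in>opts Y'. E X Y'') \<or> (\<exists>X'\<in>opts X. E X' Y'))"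
  shows "E X Y \<Longrightarrow> (grundy opts X :: 'o) = grundy opts Y"
proof -
  define R0 where "R0 = {(a, b). a \<in> opts b \<and> terminating opts b}"
  have wf0: "wf R0"
  proof (rule acc_wfI, intro allI)
    fix x
    show "x \<in> Wellfounded.acc R0"
    proof (cases "terminating opts x")
      case True
      have "Wellfounded.acc {(G', H). G' \<in> opts H} \<subseteq> Wellfounded.acc R0"
        by (rule acc_subset) (auto simp: R0_def)
      then show ?thesis using True unfolding terminating_def by blast
    next
      case False
      show ?thesis by (rule acc.accI) (use False in \<open>auto simp: R0_def\<close>)
    qed
  qed
  define W where "W = R0\<^sup>+ <*lex*> R0\<^sup>+"
  have wfW: "wf W" unfolding W_def by (intro wf_lex_prod wf_trancl wf0)
  have "E (fst p) (snd p) \<longrightarrow> (grundy opts (fst p) :: 'o) = grundy opts (snd p)" for p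
    using wfW
  proof (induction p rule: wf_induct_rule)
    case (less p)
    obtain X Y where p: "p = (X, Y)" by (cases p)
    show ?case
    proof
      assume "E (fst p) (snd p)"
      hence eXY: "E X Y" using p by simp
      note EX = E[OF eXY]
      have IH: "\<And>X' Y'. ((X', Y'), (X, Y)) \<in> W \<Longrightarrow> E X' Y' \<Longrightarrow> (grundy opts X' :: 'o) = grundy opts Y'"
        using less p by force
      have tX: "terminating opts X" and tY: "terminating opts Y" using EX by auto
      have step1: "\<And>a b. a \<in> opts b \<Longrightarrow> terminating opts b \<Longrightarrow> (a, b) \<in> R0\<^sup>+"
        by (auto simp: R0_def)
      have gX: "(grundy opts X :: 'o) \<notin> grundy opts ` opts X \<and> (\<forall>a < (grundy opts X :: 'o). \<exists>G'\<in>opts X. grundy opts G' = a)"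
        by (rule grundy_props[OF tX])
      have gY: "(grundy opts Y :: 'o) \<notin> grundy opts ` opts Y \<and> (\<forall>a < (grundy opts Y :: 'o). \<exists>G'\<in>opts Y. grundy opts G' = a)"
        by (rule grundy_props[OF tY])
      have c1: "\<not> (grundy opts X :: 'o) < grundy opts Y"
      proof
        assume lt: "(grundy opts X :: 'o) < grundy opts Y"
        then obtain Y' where Y': "Y' \<in> opts Y" "(grundy opts Y' :: 'o) = grundy opts X" using gY by blast
        have tY': "terminating opts Y'" using term_opt[OF tY Y'(1)] .
        have gY': "(grundy opts Y' :: 'o) \<notin> grundy opts ` opts Y'" using grundy_props[OF tY'] by blast
        from EX Y'(1) have "(\<exists>Y''\<in>opts Y'. E X Y'') \<or> (\<exists>X'\<in>opts X. E X' Y')" by blast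
        then show False
        proof
          assume "\<exists>Y''\<in>opts Y'. E X Y''"
          then obtain Y'' where Y'': "Y'' \<in> opts Y'" "E X Y''" by blast
          have "(Y'', Y) \<in> R0\<^sup>+" using step1[OF Y''(1) tY'] step1[OF Y'(1) tY] by (rule trancl_trans)
          then have "((X, Y''), (X, Y)) \<in> W" by (simp add: W_def)
          then have "(grundy opts X :: 'o) = grundy opts Y''" using IH Y''(2) by blast
          then show False using gY' Y' Y''(1) by (metis image_eqI)
        next
          assume "\<exists>X'\<in>opts X. E X' Y'"
          then obtain X' where X': "X' \<in> opts X" "E X' Y'" by blast
          have "((X', Y'), (X, Y)) \<in> W" using step1[OF X'(1) tX] by (simp add: W_def)
          then have "(grundy opts X' :: 'o) = grundy opts Y'" using IH X'(2) by blast
          then show False using gX Y' X'(1) by (metis image_eqI)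
        qed
      qed
      have c2: "\<not> (grundy opts Y :: 'o) < grundy opts X"
      proof
        assume lt: "(grundy opts Y :: 'o) < grundy opts X"
        then obtain X' where X': "X' \<in> opts X" "(grundy opts X' :: 'o) = grundy opts Y" using gX by blast
        have tX': "terminating opts X'" using term_opt[OF tX X'(1)] .
        have gX': "(grundy opts X' :: 'o) \<notin> grundy opts ` opts X'" using grundy_props[OF tX'] by blast
        from EX X'(1) have "(\<exists>X''\<in>opts X'. E X'' Y) \<or> (\<exists>Y'\<in>opts Y. E X' Y')" by blast
        then show False
        proof
          assume "\<exists>X''\<in>opts X'. E X'' Y"
          then obtain X'' where X'': "X'' \<in> opts X'" "E X'' Y" by blast
          have "(X'', X) \<in> R0\<^sup>+" using step1[OF X''(1) tX'] step1[OF X'(1) tX] by (rule trancl_trans)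
          then have "((X'', Y), (X, Y)) \<in> W" by (simp add: W_def)
          then have "(grundy opts X'' :: 'o) = grundy opts Y" using IH X''(2) by blast
          then show False using gX' X' X''(1) by (metis image_eqI)
        next
          assume "\<exists>Y'\<in>opts Y. E X' Y'"
          then obtain Y' where Y': "Y' \<in> opts Y" "E X' Y'" by blast
          have "((X', Y'), (X, Y)) \<in> W" using step1[OF X'(1) tX] by (simp add: W_def)
          then have "(grundy opts X' :: 'o) = grundy opts Y'" using IH Y'(2) by blast
          then show False using gY X' Y'(1) by (metis image_eqI)
        qed
      qed
      from c1 c2 show "(grundy opts (fst p) :: 'o) = grundy opts (snd p)" using p by simp
    qed
  qed
  then show "E X Y \<Longrightarrow> (grundy opts X :: 'o) = grundy opts Y" by (metis fst_conv snd_conv)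
qed

lemma Ez_sym: "Ez TYPE('o) opts z oj X Y \<Longrightarrow> Ez TYPE('o) opts z oj Y X"
  unfolding Ez_def by (metis Cc_sym)

lemma Cc_same:
  assumes C: "Cc TYPE('o) opts z m A B" and ne: "opts (A i1) \<noteq> {}"
    and e: "gamma_eq TYPE('o) opts m A'' (B i1)" and zero: "\<forall>j. i1 < j \<longrightarrow> A j = z \<and> B j = z"
  shows "Cc TYPE('o) opts z m (A(i1 := A'')) B"
  unfolding Cc_def
proof
  fix i
  show "gamma_eq TYPE('o) opts (Suc m) ((A(i1 := A'')) i) (B i) \<or>
      (gamma_eq TYPE('o) opts m ((A(i1 := A'')) i) (B i) \<and> (\<forall>j. i < j \<longrightarrow> (A(i1 := A'')) j = z \<and> B j = z))"
  proof (cases "i = i1")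
    case True then show ?thesis using e zero by auto
  next
    case False
    from C have "gamma_eq TYPE('o) opts (Suc m) (A i) (B i) \<or>
      (gamma_eq TYPE('o) opts m (A i) (B i) \<and> (\<forall>j. i < j \<longrightarrow> A j = z \<and> B j = z))"
      unfolding Cc_def by blast
    then show ?thesis using False ne z_opts by (metis fun_upd_other fun_upd_same)
  qed
qed

lemma base_dir:
  assumes tA: "terminating opts (oj A)" and tB: "terminating opts (oj B)"
    and C: "Cc TYPE('o) opts z 0 A B"
  shows "\<forall>X'\<in>opts (oj A). (\<exists>X''\<in>opts X'. Ez TYPE('o) opts z oj X'' (oj B)) \<or>
      (\<exists>Y'\<in>opts (oj B). Ez TYPE('o) opts z oj X' Y')"
proof
  fix X' assume X'in0: "X' \<in> opts (oj A)"
  then have "X' \<in> {oj (upd z A i0 G') | i0 G'. G' \<in> opts (A i0)}" by (simp only: join_opts)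
  then obtain i1 A' where X': "X' = oj (upd z A i1 A')" and A': "A' \<in> opts (A i1)"
    by blast
  have tX': "terminating opts X'" using term_opt[OF tA] \<open>X' \<in> opts (oj A)\<close> by blast
  have tAi: "terminating opts (A i1)" using term_comp[OF tA] .
  have tBi: "terminating opts (B i1)" using term_comp[OF tB] .
  have tA': "terminating opts A'" using term_opt[OF tAi A'] .
  have good: "Ez TYPE('o) opts z oj X' (oj (upd z B i1 B'))"
    if B': "B' \<in> opts (B i1)" and e: "gamma_eq TYPE('o) opts 0 A' B'" for B'
  proof -
    have "oj (upd z B i1 B') \<in> opts (oj B)" using upd_in[of B' B i1, OF B'] .
    then have "terminating opts (oj (upd z B i1 B'))" using term_opt[OF tB] by blast
    moreover have "Cc TYPE('o) opts z 0 (upd z A i1 A') (upd z B i1 B')"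
      by (rule opt_step[OF C A' e])
    ultimately show ?thesis using tX' X' unfolding Ez_def
      by (intro exI[of _ "upd z A i1 A'"] exI[of _ "upd z B i1 B'"]) simp
  qed
  from C have "gamma_eq TYPE('o) opts (Suc 0) (A i1) (B i1) \<or>
      (gamma_eq TYPE('o) opts 0 (A i1) (B i1) \<and> (\<forall>j. i1 < j \<longrightarrow> A j = z \<and> B j = z))"
    unfolding Cc_def by simp
  then show "(\<exists>X''\<in>opts X'. Ez TYPE('o) opts z oj X'' (oj B)) \<or>
      (\<exists>Y'\<in>opts (oj B). Ez TYPE('o) opts z oj X' Y')"
  proof
    assume "gamma_eq TYPE('o) opts (Suc 0) (A i1) (B i1)"
    then have "\<exists>B'\<in>opts (B i1). gamma_eq TYPE('o) opts 0 A' B'" using A' by simp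
    then obtain B' where B'1: "B' \<in> opts (B i1)" and e0: "gamma_eq TYPE('o) opts 0 A' B'" by blast
    show ?thesis using good[OF B'1 e0] upd_in[of B' B i1, OF B'1] by blast
  next
    assume h: "gamma_eq TYPE('o) opts 0 (A i1) (B i1) \<and> (\<forall>j. i1 < j \<longrightarrow> A j = z \<and> B j = z)"
    then have gAB: "(grundy opts (A i1) :: 'o) = grundy opts (B i1)" by simp
    have gne: "(grundy opts A' :: 'o) \<noteq> grundy opts (A i1)" using grundy_props[OF tAi] A' by (metis image_eqI)
    show ?thesis
    proof (cases "(grundy opts A' :: 'o) < grundy opts (A i1)")
      case True
      then have "\<exists>B'\<in>opts (B i1). (grundy opts B' :: 'o) = grundy opts A'"
        using grundy_props[OF tBi] gAB by simp
      then obtain B' where B'1: "B' \<in> opts (B i1)" and g: "(grundy opts B' :: 'o) = grundy opts A'" by blast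
      have e0: "gamma_eq TYPE('o) opts 0 A' B'" using g by simp
      show ?thesis using good[OF B'1 e0] upd_in[of B' B i1, OF B'1] by blast
    next
      case False
      then have "(grundy opts (A i1) :: 'o) < grundy opts A'" using gne by simp
      then have "\<exists>A''\<in>opts A'. (grundy opts A'' :: 'o) = grundy opts (A i1)"
        using grundy_props[OF tA'] by simp
      then obtain A'' where A'': "A'' \<in> opts A'" "(grundy opts A'' :: 'o) = grundy opts (A i1)"
        by blast
      have "oj (upd z (upd z A i1 A') i1 A'') \<in> opts X'" using X' upd_in[of A'' "upd z A i1 A'" i1] A''(1)
        by (simp add: upd_def)
      moreover have eq: "upd z (upd z A i1 A') i1 A'' = A(i1 := A'')"
        using h by (auto simp: upd_def fun_eq_iff)
      moreover have "Cc TYPE('o) opts z 0 (A(i1 := A'')) B"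
        by (rule Cc_same[OF C]) (use A' A''(2) gAB h in auto)
      ultimately have mem: "oj (A(i1 := A'')) \<in> opts X'" and CC: "Cc TYPE('o) opts z 0 (A(i1 := A'')) B"
        by simp_all
      have "terminating opts (oj (A(i1 := A'')))" using term_opt[OF tX' mem] .
      then have "Ez TYPE('o) opts z oj (oj (A(i1 := A''))) (oj B)"
        using tB CC unfolding Ez_def by (intro exI[of _ "A(i1 := A'')"] exI[of _ B]) simp
      then show ?thesis using mem by blast
    qed
  qed
qed

lemma suc_dir:
  assumes tA: "terminating opts (oj A)" and tB: "terminating opts (oj B)"
    and C: "Cc TYPE('o) opts z m A B" and all: "\<forall>i. gamma_eq TYPE('o) opts (Suc m) (A i) (B i)"
    and IH: "\<And>A B. terminating opts (oj A) \<Longrightarrow> terminating opts (oj B) \<Longrightarrow> Cc TYPE('o) opts z m A B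
       \<Longrightarrow> gamma_eq TYPE('o) opts m (oj A) (oj B)"
  shows "\<forall>X'\<in>opts (oj A). \<exists>Y'\<in>opts (oj B). gamma_eq TYPE('o) opts m X' Y'"
proof
  fix X' assume X'in: "X' \<in> opts (oj A)"
  then have "X' \<in> {oj (upd z A i0 G') | i0 G'. G' \<in> opts (A i0)}" by (simp only: join_opts)
  then obtain i1 A' where X': "X' = oj (upd z A i1 A')" and A': "A' \<in> opts (A i1)"
    by blast
  have "\<exists>B'\<in>opts (B i1). gamma_eq TYPE('o) opts m A' B'" using all[rule_format, of i1] A' unfolding gamma_eq.simps by blast
  then obtain B' where B': "B' \<in> opts (B i1)" "gamma_eq TYPE('o) opts m A' B'" by blast
  have Yin: "oj (upd z B i1 B') \<in> opts (oj B)" using upd_in[of B' B i1, OF B'(1)] .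
  have "gamma_eq TYPE('o) opts m X' (oj (upd z B i1 B'))"
  proof -
    have tX': "terminating opts (oj (upd z A i1 A'))" using term_opt[OF tA X'in] X' by simp
    have tY': "terminating opts (oj (upd z B i1 B'))" using term_opt[OF tB Yin] .
    show ?thesis unfolding X' by (rule IH[OF tX' tY' opt_step[OF C A' B'(2)]])
  qed
  then show "\<exists>Y'\<in>opts (oj B). gamma_eq TYPE('o) opts m X' Y'" using Yin by blast
qed

lemma main:
  "terminating opts (oj A) \<Longrightarrow> terminating opts (oj B) \<Longrightarrow> Cc TYPE('o) opts z m A B
    \<Longrightarrow> gamma_eq TYPE('o) opts m (oj A) (oj B)"
proof (induction m arbitrary: A B)
  case 0
  have "Ez TYPE('o) opts z oj (oj A) (oj B)" using 0 unfolding Ez_def by blast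
  moreover have "(grundy opts X :: 'o) = grundy opts Y" if "Ez TYPE('o) opts z oj X Y" for X Y
  proof (rule grundy_crit[where E="Ez TYPE('o) opts z oj"])
    show "Ez TYPE('o) opts z oj X Y" by (rule that)
  next
    fix X Y assume e: "Ez TYPE('o) opts z oj X Y"
    then obtain A B where ab: "X = oj A" "Y = oj B" "terminating opts X" "terminating opts Y" "Cc TYPE('o) opts z 0 A B"
      unfolding Ez_def by blast
    have d1: "\<forall>X'\<in>opts X. (\<exists>X''\<in>opts X'. Ez TYPE('o) opts z oj X'' Y) \<or> (\<exists>Y'\<in>opts Y. Ez TYPE('o) opts z oj X' Y')"
      using base_dir[of A B] ab by simp
    have d2: "\<forall>Y'\<in>opts Y. (\<exists>Y''\<in>opts Y'. Ez TYPE('o) opts z oj Y'' X) \<or> (\<exists>X'\<in>opts X. Ez TYPE('o) opts z oj Y' X')"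
      using base_dir[of B A] ab Cc_sym[OF ab(5)] by simp
    have d2': "\<forall>Y'\<in>opts Y. (\<exists>Y''\<in>opts Y'. Ez TYPE('o) opts z oj X Y'') \<or> (\<exists>X'\<in>opts X. Ez TYPE('o) opts z oj X' Y')"
    proof
      fix Y' assume "Y' \<in> opts Y"
      then have "(\<exists>Y''\<in>opts Y'. Ez TYPE('o) opts z oj Y'' X) \<or> (\<exists>X'\<in>opts X. Ez TYPE('o) opts z oj Y' X')" using d2 by blast
      then show "(\<exists>Y''\<in>opts Y'. Ez TYPE('o) opts z oj X Y'') \<or> (\<exists>X'\<in>opts X. Ez TYPE('o) opts z oj X' Y')" using Ez_sym by blast
    qed
    show "terminating opts X \<and> terminating opts Y \<and>
     (\<forall>X'\<in>opts X. (\<exists>X''\<in>opts X'. Ez TYPE('o) opts z oj X'' Y) \<or> (\<exists>Y'\<in>opts Y. Ez TYPE('o) opts z oj X' Y')) \<and>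
     (\<forall>Y'\<in>opts Y. (\<exists>Y''\<in>opts Y'. Ez TYPE('o) opts z oj X Y'') \<or> (\<exists>X'\<in>opts X. Ez TYPE('o) opts z oj X' Y'))"
      using ab(3,4) d1 d2' by blast
  qed
  ultimately show ?case by simp
next
  case (Suc m)
  have tc: "\<And>i. terminating opts (A i)" "\<And>i. terminating opts (B i)" using term_comp Suc.prems by auto
  have all: "\<forall>i. gamma_eq TYPE('o) opts (Suc m) (A i) (B i)"
  proof
    fix i
    from Suc.prems(3) have "gamma_eq TYPE('o) opts (Suc (Suc m)) (A i) (B i) \<or> gamma_eq TYPE('o) opts (Suc m) (A i) (B i)"
      unfolding Cc_def by blast
    then show "gamma_eq TYPE('o) opts (Suc m) (A i) (B i)" using gamma_eq_mono[OF tc(1) tc(2)] by blast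
  qed
  have C: "Cc TYPE('o) opts z m A B" using all unfolding Cc_def by blast
  have allB: "\<forall>i. gamma_eq TYPE('o) opts (Suc m) (B i) (A i)" proof
    fix i from all have "gamma_eq TYPE('o) opts (Suc m) (A i) (B i)" by blast
    then show "gamma_eq TYPE('o) opts (Suc m) (B i) (A i)" by (rule gamma_eq_sym)
  qed
  have d1: "\<forall>X'\<in>opts (oj A). \<exists>Y'\<in>opts (oj B). gamma_eq TYPE('o) opts m X' Y'"
    by (rule suc_dir[OF Suc.prems(1,2) C all]) (rule Suc.IH)
  have d2: "\<forall>X'\<in>opts (oj B). \<exists>Y'\<in>opts (oj A). gamma_eq TYPE('o) opts m X' Y'"
    by (rule suc_dir[OF Suc.prems(2,1) Cc_sym[OF C] allB]) (rule Suc.IH)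
  have d2': "\<forall>H'\<in>opts (oj B). \<exists>G'\<in>opts (oj A). gamma_eq TYPE('o) opts m G' H'"
  proof
    fix H' assume "H' \<in> opts (oj B)"
    then obtain G' where "G' \<in> opts (oj A)" "gamma_eq TYPE('o) opts m H' G'" using d2 by blast
    then show "\<exists>G'\<in>opts (oj A). gamma_eq TYPE('o) opts m G' H'" by (meson gamma_eq_sym)
  qed
  show ?case using d1 d2' by simp
qed

end

theorem mainTheorem10:
  fixes opts :: "'g \<Rightarrow> 'g set" and z :: 'g and oj :: "('i::order \<Rightarrow> 'g) \<Rightarrow> 'g"
    and Gs Hs :: "'i \<Rightarrow> 'g" and k :: nat
  assumes big: "\<not> (\<exists>f :: 'g \<Rightarrow> 'o::wellorder. surj f)"
    and join: "is_ordered_join opts z oj"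
    and k: "k \<ge> 1"
    and termG: "terminating opts (oj Gs)"
    and termH: "terminating opts (oj Hs)"
    and eq: "\<forall>i. gamma_eq TYPE('o) opts k (Gs i) (Hs i)"
  shows "gamma_eq TYPE('o) opts k (oj Gs) (oj Hs)"
proof -
  obtain m where km: "k = Suc m" using k by (cases k) auto
  have eqs: "\<forall>i. gamma_eq TYPE('o) opts (Suc m) (Gs i) (Hs i)" using eq km by simp
  have C: "Cc TYPE('o) opts z m Gs Hs" using eqs unfolding Cc_def by blast
  have eqs': "\<forall>i. gamma_eq TYPE('o) opts (Suc m) (Hs i) (Gs i)" proof
    fix i from eqs have "gamma_eq TYPE('o) opts (Suc m) (Gs i) (Hs i)" by blast
    then show "gamma_eq TYPE('o) opts (Suc m) (Hs i) (Gs i)" by (rule gamma_eq_sym)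
  qed
  have d1: "\<forall>X'\<in>opts (oj Gs). \<exists>Y'\<in>opts (oj Hs). gamma_eq TYPE('o) opts m X' Y'"
    by (rule suc_dir[OF big join termG termH C eqs]) (rule main[OF big join])
  have d2: "\<forall>X'\<in>opts (oj Hs). \<exists>Y'\<in>opts (oj Gs). gamma_eq TYPE('o) opts m X' Y'"
    by (rule suc_dir[OF big join termH termG Cc_sym[OF C] eqs']) (rule main[OF big join])
  have d2': "\<forall>H'\<in>opts (oj Hs). \<exists>G'\<in>opts (oj Gs). gamma_eq TYPE('o) opts m G' H'"
  proof
    fix H' assume "H' \<in> opts (oj Hs)"
    then obtain G' where "G' \<in> opts (oj Gs)" "gamma_eq TYPE('o) opts m H' G'" using d2 by blast
    then show "\<exists>G'\<in>opts (oj Gs). gamma_eq TYPE('o) opts m G' H'" by (meson gamma_eq_sym)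
  qed
  show ?thesis using d1 d2' km by simp
qed

end
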